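(* Let $(\mathrm{G},\mu)$ be a Lorentzian flat Lie group which admits a timelike left-invariant Killing vector field. Then $\mathrm{G}$ is 2-solvable (i.e. the derived algebra $[\mathfrak{g},\mathfrak{g}]$ of its Lie algebra $\mathfrak{g}$ is abelian) and unimodular, and hence $(\mathrm{G},\mu)$ is geodesically complete.
   Context: A Lorentzian flat Lie group is a connected Lie group $\mathrm{G}$ endowed with a left-invariant flat pseudo-Riemannian metric $\mu$ of signature $(-,+,\dots,+)$. A vector field $X$ is timelike if $\mu(X,X)<0$ everywhere, and Killing if the flow of $X$ preserves $\mu$. *)

theory Defs
  imports "HOL-Analysis.Analysis"
begin

definition lie_algebra :: "('a::euclidean_space \<Rightarrow> 'a \<Rightarrow> 'a) \<Rightarrow> bool" where
  "lie_algebra br \<longleftrightarrow> bilinear br \<and> (\<forall>u v. br u v = - br v u) \<and>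
     (\<forall>u v w. br u (br v w) + br v (br w u) + br w (br u v) = 0)"

text \<open>Lorentzian scalar product: symmetric bilinear form of signature (-,+,...,+).\<close>
definition lorentzian_form :: "('a::euclidean_space \<Rightarrow> 'a \<Rightarrow> real) \<Rightarrow> bool" where
  "lorentzian_form m \<longleftrightarrow> bilinear m \<and> (\<forall>u v. m u v = m v u) \<and>
     (\<exists>e. m e e = -1 \<and> (\<forall>v. m e v = 0 \<and> v \<noteq> 0 \<longrightarrow> m v v > 0))"

text \<open>Levi-Civita product of the left-invariant metric: u.v = nabla_u v on left-invariant fields
  (torsion free and metric; it is uniquely determined by these conditions).\<close>
definition levi_civita_product ::
  "('a::euclidean_space \<Rightarrow> 'a \<Rightarrow> 'a) \<Rightarrow> ('a \<Rightarrow> 'a \<Rightarrow> real) \<Rightarrow> ('a \<Rightarrow> 'a \<Rightarrow> 'a) \<Rightarrow> bool" where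
  "levi_civita_product br m p \<longleftrightarrow> bilinear p \<and>
     (\<forall>u v. p u v - p v u = br u v) \<and>
     (\<forall>u v w. m (p u v) w + m v (p u w) = 0)"

definition flat_product :: "('a::euclidean_space \<Rightarrow> 'a \<Rightarrow> 'a) \<Rightarrow> ('a \<Rightarrow> 'a \<Rightarrow> 'a) \<Rightarrow> bool" where
  "flat_product br p \<longleftrightarrow> (\<forall>u v w. p (br u v) w = p u (p v w) - p v (p u w))"

definition killing_vector ::
  "('a::euclidean_space \<Rightarrow> 'a \<Rightarrow> real) \<Rightarrow> ('a \<Rightarrow> 'a \<Rightarrow> 'a) \<Rightarrow> 'a \<Rightarrow> bool" where
  "killing_vector m p u \<longleftrightarrow> (\<forall>v w. m (p v u) w + m v (p w u) = 0)"

definition two_solvable :: "('a \<Rightarrow> 'a \<Rightarrow> 'a::euclidean_space) \<Rightarrow> bool" where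
  "two_solvable br \<longleftrightarrow> (\<forall>a b c d. br (br a b) (br c d) = 0)"

text \<open>Unimodular (connected group): tr(ad x) = 0 for all x.\<close>
definition unimodular :: "('a \<Rightarrow> 'a \<Rightarrow> 'a::euclidean_space) \<Rightarrow> bool" where
  "unimodular br \<longleftrightarrow> (\<forall>x. (\<Sum>b\<in>Basis. br x b \<bullet> b) = 0)"

text \<open>Geodesic completeness of a left-invariant metric: every solution of the
  Euler-Arnold equation c' = - c.c (the left-translated geodesic equation) exists for all time.\<close>
definition geodesically_complete :: "('a::euclidean_space \<Rightarrow> 'a \<Rightarrow> 'a) \<Rightarrow> bool" where
  "geodesically_complete p \<longleftrightarrow>
     (\<forall>c0. \<exists>c::real \<Rightarrow> 'a. c 0 = c0 \<and> (\<forall>t. (c has_vector_derivative (- p (c t) (c t))) (at t)))"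

end

theory Submission
  imports Defs
begin


lemma bil_sum_r:
  assumes "bilinear q" "finite F"
  shows "q x (\<Sum>f\<in>F. c f *\<^sub>R g f) = (\<Sum>f\<in>F. c f *\<^sub>R q x (g f))"
  using assms(2) by (induction F rule: finite_induct)
    (auto simp: bilinear_radd[OF assms(1)] bilinear_rmul[OF assms(1)] bilinear_rzero[OF assms(1)])

lemma bil_sum_l:
  assumes "bilinear q" "finite F"
  shows "q (\<Sum>f\<in>F. c f *\<^sub>R g f) x = (\<Sum>f\<in>F. c f *\<^sub>R q (g f) x)"
  using assms(2) by (induction F rule: finite_induct)
    (auto simp: bilinear_ladd[OF assms(1)] bilinear_lmul[OF assms(1)] bilinear_lzero[OF assms(1)])

lemma gs_step:
  fixes q :: "'a::euclidean_space \<Rightarrow> 'a \<Rightarrow> real"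
  assumes bq: "bilinear q" and sym: "\<And>x y. q x y = q y x"
  shows "subspace W \<Longrightarrow> dim W \<le> n \<Longrightarrow> (\<forall>x\<in>W. x \<noteq> 0 \<longrightarrow> q x x > 0) \<Longrightarrow>
    \<exists>F. finite F \<and> F \<subseteq> W \<and> (\<forall>f\<in>F. \<forall>g\<in>F. q f g = (if f = g then 1 else 0)) \<and>
        (\<forall>y\<in>W. y = (\<Sum>f\<in>F. q f y *\<^sub>R f))"
proof (induction n arbitrary: W)
  case 0
  then have "W = {0}"
    using dim_eq_0[of W] subspace_0[of W] by auto
  then show ?case by (intro exI[of _ "{}"]) auto
next
  case (Suc n)
  show ?case
  proof (cases "W \<subseteq> {0}")
    case True
    then show ?thesis by (intro exI[of _ "{}"]) auto
  next
    case False
    then obtain v where v: "v \<in> W" "v \<noteq> 0" by auto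
    have qv: "q v v > 0" using Suc.prems v by auto
    define f where "f = (1 / sqrt (q v v)) *\<^sub>R v"
    have fW: "f \<in> W" using Suc.prems(1) v(1) unfolding f_def by (simp add: subspace_scale)
    have ff: "q f f = 1"
      using qv by (simp add: f_def bilinear_lmul[OF bq] bilinear_rmul[OF bq] real_sqrt_mult[symmetric]
        power2_eq_square[symmetric])
    define W' where "W' = {y\<in>W. q f y = 0}"
    have sW': "subspace W'"
      unfolding W'_def subspace_def using Suc.prems(1)
      by (auto simp: subspace_def bilinear_radd[OF bq] bilinear_rmul[OF bq] bilinear_rzero[OF bq])
    have "f \<notin> W'" using ff unfolding W'_def by simp
    then have "W' \<subset> W" using fW unfolding W'_def by blast
    then have "dim W' < dim W"
    proof -
      have s1: "span W' = W'" and s2: "span W = W" using sW' Suc.prems(1) by (simp_all add: span_eq_iff)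
      have "span W' \<subset> span W" unfolding s1 s2 by (rule \<open>W' \<subset> W\<close>)
      then show ?thesis by (rule dim_psubset)
    qed
    then have "dim W' \<le> n" using Suc.prems(2) by simp
    moreover have "\<forall>x\<in>W'. x \<noteq> 0 \<longrightarrow> q x x > 0" using Suc.prems(3) unfolding W'_def by auto
    ultimately obtain F where F: "finite F" "F \<subseteq> W'"
      "\<forall>f\<in>F. \<forall>g\<in>F. q f g = (if f = g then 1 else 0)" "\<forall>y\<in>W'. y = (\<Sum>f\<in>F. q f y *\<^sub>R f)"
      using Suc.IH[OF sW'] by blast
    have fF: "f \<notin> F" using F(2) ff unfolding W'_def by auto
    have qgf: "q g f = 0" if "g \<in> F" for g using that F(2) sym unfolding W'_def by auto
    show ?thesis
    proof (intro exI[of _ "insert f F"] conjI ballI)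
      show "finite (insert f F)" using F by simp
      show "insert f F \<subseteq> W" using F fW unfolding W'_def by auto
      fix g h assume "g \<in> insert f F" "h \<in> insert f F"
      then show "q g h = (if g = h then 1 else 0)"
        using F(3) ff qgf fF sym by (auto, metis)
    next
      fix y assume y: "y \<in> W"
      define y' where "y' = y - q f y *\<^sub>R f"
      have y'W: "y' \<in> W'" unfolding W'_def y'_def using y fW Suc.prems(1) ff
        by (auto simp: subspace_diff subspace_scale bilinear_rsub[OF bq] bilinear_rmul[OF bq])
      have "\<And>g. g \<in> F \<Longrightarrow> q g y' = q g y"
        unfolding y'_def using qgf by (simp add: bilinear_rsub[OF bq] bilinear_rmul[OF bq])
      then have "y' = (\<Sum>g\<in>F. q g y *\<^sub>R g)" using F(4) y'W by (metis (no_types, lifting) sum.cong)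
      then have "y = q f y *\<^sub>R f + (\<Sum>g\<in>F. q g y *\<^sub>R g)" unfolding y'_def by (simp add: algebra_simps)
      then show "y = (\<Sum>g\<in>insert f F. q g y *\<^sub>R g)" using F(1) fF by simp
    qed
  qed
qed

lemma gram_schmidt_form:
  fixes q :: "'a::euclidean_space \<Rightarrow> 'a \<Rightarrow> real"
  assumes "bilinear q" "\<And>x y. q x y = q y x" "subspace W" "\<And>x. x \<in> W \<Longrightarrow> x \<noteq> 0 \<Longrightarrow> q x x > 0"
  shows "\<exists>F. finite F \<and> F \<subseteq> W \<and> (\<forall>f\<in>F. \<forall>g\<in>F. q f g = (if f = g then 1 else 0)) \<and>
        (\<forall>y\<in>W. y = (\<Sum>f\<in>F. q f y *\<^sub>R f))"
  using gs_step[OF assms(1,2) assms(3) order_refl[of "dim W"]] assms(4) by blast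



lemma orth_skew_sum:
  fixes q :: "'a::euclidean_space \<Rightarrow> 'a \<Rightarrow> real" and \<phi> :: "'a \<Rightarrow> 'a \<Rightarrow> 'b::real_vector"
  assumes bq: "bilinear q" and sym: "\<And>x y. q x y = q y x" and fin: "finite F"
    and ex: "\<forall>y\<in>W. y = (\<Sum>g\<in>F. q g y *\<^sub>R g)" and FW: "F \<subseteq> W"
    and AW: "\<And>f. f \<in> F \<Longrightarrow> A f \<in> W"
    and skew: "\<And>a b. a \<in> W \<Longrightarrow> b \<in> W \<Longrightarrow> q (A a) b = - q a (A b)"
    and bp: "bilinear \<phi>"
  shows "(\<Sum>f\<in>F. \<phi> (A f) f + \<phi> f (A f)) = 0"
proof -
  have 1: "(\<Sum>f\<in>F. \<phi> (A f) f) = (\<Sum>f\<in>F. \<Sum>g\<in>F. q g (A f) *\<^sub>R \<phi> g f)"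
  proof (rule sum.cong[OF refl])
    fix f assume "f \<in> F"
    then have "A f = (\<Sum>g\<in>F. q g (A f) *\<^sub>R g)" using ex AW by auto
    then have "\<phi> (A f) f = \<phi> (\<Sum>g\<in>F. q g (A f) *\<^sub>R g) f" by simp
    also have "\<dots> = (\<Sum>g\<in>F. q g (A f) *\<^sub>R \<phi> g f)" by (rule bil_sum_l[OF bp fin])
    finally show "\<phi> (A f) f = (\<Sum>g\<in>F. q g (A f) *\<^sub>R \<phi> g f)" .
  qed
  have 2: "(\<Sum>f\<in>F. \<phi> f (A f)) = (\<Sum>f\<in>F. \<Sum>g\<in>F. q g (A f) *\<^sub>R \<phi> f g)"
  proof (rule sum.cong[OF refl])
    fix f assume "f \<in> F"
    then have "A f = (\<Sum>g\<in>F. q g (A f) *\<^sub>R g)" using ex AW by auto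
    then have "\<phi> f (A f) = \<phi> f (\<Sum>g\<in>F. q g (A f) *\<^sub>R g)" by simp
    also have "\<dots> = (\<Sum>g\<in>F. q g (A f) *\<^sub>R \<phi> f g)" by (rule bil_sum_r[OF bp fin])
    finally show "\<phi> f (A f) = (\<Sum>g\<in>F. q g (A f) *\<^sub>R \<phi> f g)" .
  qed
  also have "\<dots> = (\<Sum>g\<in>F. \<Sum>f\<in>F. q g (A f) *\<^sub>R \<phi> f g)" by (rule sum.swap)
  also have "\<dots> = (\<Sum>g\<in>F. \<Sum>f\<in>F. - (q f (A g) *\<^sub>R \<phi> f g))"
  proof (intro sum.cong refl)
    fix g f assume "g \<in> F" "f \<in> F"
    then have "q g (A f) = - q f (A g)" using skew[of f g] FW sym by auto
    then show "q g (A f) *\<^sub>R \<phi> f g = - (q f (A g) *\<^sub>R \<phi> f g)" by simp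
  qed
  finally have "(\<Sum>f\<in>F. \<phi> f (A f)) = - (\<Sum>f\<in>F. \<Sum>g\<in>F. q g (A f) *\<^sub>R \<phi> g f)"
    by (simp add: sum_negf)
  with 1 show ?thesis by (simp add: sum.distrib)
qed

lemma trace_onb:
  fixes q :: "'a::euclidean_space \<Rightarrow> 'a \<Rightarrow> real"
  assumes lf: "linear f" and bq: "bilinear q" and fin: "finite E"
    and ex: "\<And>y. y = (\<Sum>e\<in>E. q e y *\<^sub>R e)"
  shows "(\<Sum>b\<in>Basis. f b \<bullet> b) = (\<Sum>e\<in>E. q e (f e))"
proof -
  have "(\<Sum>b\<in>Basis. f b \<bullet> b) = (\<Sum>b\<in>Basis. \<Sum>e\<in>E. q e (f b) * (e \<bullet> b))"
  proof (rule sum.cong[OF refl])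
    fix b :: 'a
    have "f b \<bullet> b = (\<Sum>e\<in>E. q e (f b) *\<^sub>R e) \<bullet> b" using ex[of "f b"] by simp
    also have "\<dots> = (\<Sum>e\<in>E. q e (f b) * (e \<bullet> b))" by (simp add: inner_sum_left)
    finally show "f b \<bullet> b = (\<Sum>e\<in>E. q e (f b) * (e \<bullet> b))" .
  qed
  also have "\<dots> = (\<Sum>e\<in>E. \<Sum>b\<in>Basis. q e (f b) * (e \<bullet> b))" by (rule sum.swap)
  also have "\<dots> = (\<Sum>e\<in>E. q e (f e))"
  proof (rule sum.cong[OF refl])
    fix e
    have "q e (f e) = q e (f (\<Sum>b\<in>Basis. (e \<bullet> b) *\<^sub>R b))" by (simp add: euclidean_representation)
    also have "\<dots> = q e (\<Sum>b\<in>Basis. (e \<bullet> b) *\<^sub>R f b)"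
      by (simp add: linear_sum[OF lf] linear_scale[OF lf])
    also have "\<dots> = (\<Sum>b\<in>Basis. (e \<bullet> b) *\<^sub>R q e (f b))" by (rule bil_sum_r[OF bq]) simp
    finally show "(\<Sum>b\<in>Basis. q e (f b) * (e \<bullet> b)) = q e (f e)" by (simp add: mult.commute)
  qed
  finally show ?thesis .
qed

lemma trace_comm:
  fixes f g :: "'a::euclidean_space \<Rightarrow> 'a"
  assumes lf: "linear f" and lg: "linear g"
  shows "(\<Sum>b\<in>Basis. f (g b) \<bullet> b) = (\<Sum>b\<in>Basis. g (f b) \<bullet> b)"
proof -
  have e1: "\<And>b. f (g b) \<bullet> b = (\<Sum>c\<in>Basis. (g b \<bullet> c) * (f c \<bullet> b))"
  proof -
    fix b :: 'a
    have "f (g b) = f (\<Sum>c\<in>Basis. (g b \<bullet> c) *\<^sub>R c)" by (simp add: euclidean_representation)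
    also have "\<dots> = (\<Sum>c\<in>Basis. (g b \<bullet> c) *\<^sub>R f c)" by (simp add: linear_sum[OF lf] linear_scale[OF lf])
    finally show "f (g b) \<bullet> b = (\<Sum>c\<in>Basis. (g b \<bullet> c) * (f c \<bullet> b))" by (simp add: inner_sum_left)
  qed
  have e2: "\<And>b. g (f b) \<bullet> b = (\<Sum>c\<in>Basis. (f b \<bullet> c) * (g c \<bullet> b))"
  proof -
    fix b :: 'a
    have "g (f b) = g (\<Sum>c\<in>Basis. (f b \<bullet> c) *\<^sub>R c)" by (simp add: euclidean_representation)
    also have "\<dots> = (\<Sum>c\<in>Basis. (f b \<bullet> c) *\<^sub>R g c)" by (simp add: linear_sum[OF lg] linear_scale[OF lg])
    finally show "g (f b) \<bullet> b = (\<Sum>c\<in>Basis. (f b \<bullet> c) * (g c \<bullet> b))" by (simp add: inner_sum_left)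
  qed
  have "(\<Sum>b\<in>Basis. f (g b) \<bullet> b) = (\<Sum>b\<in>Basis. \<Sum>c\<in>Basis. (g b \<bullet> c) * (f c \<bullet> b))" by (simp add: e1)
  also have "\<dots> = (\<Sum>c\<in>Basis. \<Sum>b\<in>Basis. (g b \<bullet> c) * (f c \<bullet> b))" by (rule sum.swap)
  also have "\<dots> = (\<Sum>c\<in>Basis. g (f c) \<bullet> c)" by (simp add: e2 mult.commute)
  finally show ?thesis .
qed



lemma linear_ode_exists:
  fixes A :: "'a::euclidean_space \<Rightarrow> 'a"
  assumes lA: "linear A"
  shows "\<exists>c. c 0 = c0 \<and> (\<forall>t. (c has_vector_derivative (- A (c t))) (at t))"
proof -
  have blA: "bounded_linear A" using lA linear_conv_bounded_linear by blast
  obtain K where K: "K \<ge> 0" "\<And>x. norm (A x) \<le> norm x * K"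
    using bounded_linear.nonneg_bounded[OF blA] by blast
  define v where "v n = (A ^^ n) c0" for n
  have vS: "v (Suc n) = A (v n)" for n by (simp add: v_def)
  have vb: "norm (v n) \<le> K ^ n * norm c0" for n
  proof (induction n)
    case 0 then show ?case by (simp add: v_def)
  next
    case (Suc n)
    have "norm (v (Suc n)) \<le> norm (v n) * K" using K(2) vS by simp
    also have "\<dots> \<le> K ^ n * norm c0 * K" using Suc K(1) by (simp add: mult_right_mono)
    finally show ?case by (simp add: algebra_simps)
  qed
  define co where "co b n = (-1) ^ n / fact n * (v n \<bullet> b)" for b :: 'a and n
  define \<gamma> where "\<gamma> b t = (\<Sum>n. co b n * t ^ n)" for b :: 'a and t :: real
  have summ: "summable (\<lambda>n. co b n * t ^ n)" if b: "b \<in> Basis" for b t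
  proof (rule summable_comparison_test[OF _ summable_mult[OF summable_exp[of "K * \<bar>t\<bar>"], of "norm c0"]])
    show "\<exists>N. \<forall>n\<ge>N. norm (co b n * t ^ n) \<le> norm c0 * (inverse (fact n) * (K * \<bar>t\<bar>) ^ n)"
    proof (intro exI allI impI)
      fix n :: nat
      have "\<bar>v n \<bullet> b\<bar> \<le> norm (v n)" using b Basis_le_norm by blast
      also have "\<dots> \<le> K ^ n * norm c0" by (rule vb)
      finally have 1: "\<bar>v n \<bullet> b\<bar> \<le> K ^ n * norm c0" .
      have "norm (co b n * t ^ n) = \<bar>v n \<bullet> b\<bar> * \<bar>t\<bar> ^ n / fact n"
        by (simp add: co_def abs_mult power_abs)
      also have "\<dots> \<le> K ^ n * norm c0 * \<bar>t\<bar> ^ n / fact n"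
        by (intro divide_right_mono mult_right_mono 1) auto
      also have "\<dots> = norm c0 * (inverse (fact n) * (K * \<bar>t\<bar>) ^ n)"
        by (simp add: field_simps power_mult_distrib)
      finally show "norm (co b n * t ^ n) \<le> norm c0 * (inverse (fact n) * (K * \<bar>t\<bar>) ^ n)" .
    qed
  qed
  have dco: "diffs (co b) n = - (\<Sum>b'\<in>Basis. (A b' \<bullet> b) * co b' n)" for b n
  proof -
    have "v (Suc n) \<bullet> b = A (\<Sum>b'\<in>Basis. (v n \<bullet> b') *\<^sub>R b') \<bullet> b"
      by (simp add: vS euclidean_representation)
    also have "\<dots> = (\<Sum>b'\<in>Basis. (v n \<bullet> b') * (A b' \<bullet> b))"
      by (simp add: linear_sum[OF lA] linear_scale[OF lA] inner_sum_left)
    finally have e: "v (Suc n) \<bullet> b = (\<Sum>b'\<in>Basis. (v n \<bullet> b') * (A b' \<bullet> b))" .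
    have "diffs (co b) n = of_nat (Suc n) * ((-1) ^ Suc n / fact (Suc n) * (v (Suc n) \<bullet> b))"
      by (simp add: diffs_def co_def)
    also have "\<dots> = - ((-1) ^ n / fact n * (v (Suc n) \<bullet> b))"
    proof -
      have "(fact (Suc n)::real) = real (Suc n) * fact n" by (simp only: fact_Suc)
      then show ?thesis by (simp del: of_nat_Suc)
    qed
    also have "\<dots> = - (\<Sum>b'\<in>Basis. (A b' \<bullet> b) * co b' n)"
      by (simp add: e co_def sum_distrib_left field_simps)
    finally show ?thesis .
  qed
  have dg: "(\<gamma> b has_real_derivative (- (\<Sum>b'\<in>Basis. (A b' \<bullet> b) * \<gamma> b' t))) (at t)"
    if b: "b \<in> Basis" for b t
  proof -
    have "(\<gamma> b has_real_derivative (\<Sum>n. diffs (co b) n * t ^ n)) (at t)"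
      unfolding \<gamma>_def[abs_def]
      by (rule termdiffs_strong_converges_everywhere) (use summ[OF b] in auto)
    moreover have "(\<Sum>n. diffs (co b) n * t ^ n) = - (\<Sum>b'\<in>Basis. (A b' \<bullet> b) * \<gamma> b' t)"
    proof -
      have "(\<Sum>n. diffs (co b) n * t ^ n) = (\<Sum>n. - (\<Sum>b'\<in>Basis. (A b' \<bullet> b) * (co b' n * t ^ n)))"
        by (simp add: dco sum_distrib_right mult.assoc)
      also have "\<dots> = - (\<Sum>n. (\<Sum>b'\<in>Basis. (A b' \<bullet> b) * (co b' n * t ^ n)))"
        by (rule suminf_minus) (auto intro!: summable_sum summable_mult summ)
      also have "(\<Sum>n. (\<Sum>b'\<in>Basis. (A b' \<bullet> b) * (co b' n * t ^ n))) = (\<Sum>b'\<in>Basis. \<Sum>n. (A b' \<bullet> b) * (co b' n * t ^ n))"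
        by (rule suminf_sum) (auto intro!: summable_mult summ)
      also have "\<dots> = (\<Sum>b'\<in>Basis. (A b' \<bullet> b) * \<gamma> b' t)"
        by (intro sum.cong refl) (simp add: suminf_mult summ \<gamma>_def)
      finally show ?thesis .
    qed
    ultimately show ?thesis by simp
  qed
  define c where "c t = (\<Sum>b\<in>Basis. \<gamma> b t *\<^sub>R b)" for t
  show ?thesis
  proof (intro exI[of _ c] conjI allI)
    have "\<gamma> b 0 = c0 \<bullet> b" for b
    proof -
      have "\<gamma> b 0 = co b 0" unfolding \<gamma>_def by (rule powser_zero)
      then show ?thesis by (simp add: co_def v_def)
    qed
    then show "c 0 = c0" by (simp add: c_def euclidean_representation)
  next
    fix t
    define s where "s b = - (\<Sum>b'\<in>Basis. (A b' \<bullet> b) * \<gamma> b' t)" for b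
    have "(c has_derivative (\<lambda>h. \<Sum>b\<in>Basis. h *\<^sub>R ((- (\<Sum>b'\<in>Basis. (A b' \<bullet> b) * \<gamma> b' t)) *\<^sub>R b))) (at t)"
      unfolding c_def[abs_def]
    proof (rule has_derivative_sum)
      fix b :: 'a assume b: "b \<in> Basis"
      have "((\<lambda>t. \<gamma> b t *\<^sub>R b) has_vector_derivative (- (\<Sum>b'\<in>Basis. (A b' \<bullet> b) * \<gamma> b' t)) *\<^sub>R b) (at t)"
        using dg[OF b, of t] by (auto intro!: derivative_eq_intros)
      then show "((\<lambda>t. \<gamma> b t *\<^sub>R b) has_derivative (\<lambda>h. h *\<^sub>R ((- (\<Sum>b'\<in>Basis. (A b' \<bullet> b) * \<gamma> b' t)) *\<^sub>R b))) (at t)"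
        by (simp add: has_vector_derivative_def)
    qed
    moreover have "(\<Sum>b\<in>Basis. (- (\<Sum>b'\<in>Basis. (A b' \<bullet> b) * \<gamma> b' t)) *\<^sub>R b) = - A (c t)"
    proof -
      have "A (c t) = (\<Sum>b'\<in>Basis. \<gamma> b' t *\<^sub>R A b')"
        by (simp add: c_def linear_sum[OF lA] linear_scale[OF lA])
      also have "\<dots> = (\<Sum>b'\<in>Basis. \<gamma> b' t *\<^sub>R (\<Sum>b\<in>Basis. (A b' \<bullet> b) *\<^sub>R b))"
        by (simp add: euclidean_representation)
      also have "\<dots> = (\<Sum>b'\<in>Basis. \<Sum>b\<in>Basis. (\<gamma> b' t * (A b' \<bullet> b)) *\<^sub>R b)"
        by (simp add: scaleR_sum_right)
      also have "\<dots> = (\<Sum>b\<in>Basis. \<Sum>b'\<in>Basis. (\<gamma> b' t * (A b' \<bullet> b)) *\<^sub>R b)"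
        by (rule sum.swap)
      also have "\<dots> = (\<Sum>b\<in>Basis. (\<Sum>b'\<in>Basis. (A b' \<bullet> b) * \<gamma> b' t) *\<^sub>R b)"
        by (simp add: scaleR_sum_left mult.commute)
      finally show ?thesis by (simp add: sum_negf)
    qed
    ultimately have d1: "(c has_derivative (\<lambda>h. \<Sum>b\<in>Basis. h *\<^sub>R (s b *\<^sub>R b))) (at t)"
      and d2: "(\<Sum>b\<in>Basis. s b *\<^sub>R b) = - A (c t)" unfolding s_def by blast+
    have "(\<lambda>h. \<Sum>b\<in>Basis. h *\<^sub>R (s b *\<^sub>R b)) = (\<lambda>h. h *\<^sub>R (- A (c t)))"
      by (rule ext) (simp only: scaleR_sum_right[symmetric] d2)
    with d1 show "(c has_vector_derivative - A (c t)) (at t)"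
      unfolding has_vector_derivative_def by simp
  qed
qed



lemma linear_bil_l: "bilinear f \<Longrightarrow> linear (\<lambda>x. f x y)" by (simp add: bilinear_def)
lemma linear_bil_r: "bilinear f \<Longrightarrow> linear (\<lambda>y. f x y)" by (simp add: bilinear_def)

locale milnor =
  fixes q :: "'a::euclidean_space \<Rightarrow> 'a \<Rightarrow> real" and p br :: "'a \<Rightarrow> 'a \<Rightarrow> 'a"
  assumes bq: "bilinear q" and qsym: "\<And>x y. q x y = q y x" and qpos: "\<And>x. x \<noteq> 0 \<Longrightarrow> q x x > 0"
    and bp: "bilinear p"
    and skew: "\<And>a b c. q (p a b) c + q b (p a c) = 0"
    and tors: "\<And>a b. p a b - p b a = br a b"
    and flat: "\<And>a b c. p (br a b) c = p a (p b c) - p b (p a c)"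
begin

lemmas qs = bilinear_ladd[OF bq] bilinear_radd[OF bq] bilinear_lmul[OF bq] bilinear_rmul[OF bq]
  bilinear_lneg[OF bq] bilinear_rneg[OF bq] bilinear_lzero[OF bq] bilinear_rzero[OF bq]
  bilinear_lsub[OF bq] bilinear_rsub[OF bq]
lemmas ps = bilinear_ladd[OF bp] bilinear_radd[OF bp] bilinear_lmul[OF bp] bilinear_rmul[OF bp]
  bilinear_lneg[OF bp] bilinear_rneg[OF bp] bilinear_lzero[OF bp] bilinear_rzero[OF bp]
  bilinear_lsub[OF bp] bilinear_rsub[OF bp]

lemma q_self_zero: "q x x = 0 \<longleftrightarrow> x = 0"
proof
  assume "q x x = 0" then show "x = 0" using qpos[of x] by force
next
  assume "x = 0" then show "q x x = 0" by (simp add: bilinear_lzero[OF bq])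
qed

lemma q_p_self: "q (p a b) b = 0"
  using skew[of a b b] qsym[of b "p a b"] by simp

lemma skew': "q a (p x b) = - q (p x a) b"
  using skew[of x a b] by simp

definition "E = (SOME E. finite E \<and> (\<forall>f\<in>E. \<forall>g\<in>E. q f g = (if f = g then 1 else 0)) \<and>
        (\<forall>y. y = (\<Sum>f\<in>E. q f y *\<^sub>R f)))"

lemma E_ex: "finite E \<and> (\<forall>f\<in>E. \<forall>g\<in>E. q f g = (if f = g then 1 else 0)) \<and>
        (\<forall>y. y = (\<Sum>f\<in>E. q f y *\<^sub>R f))"
proof -
  obtain F where F1: "finite F" and F2: "\<forall>f\<in>F. \<forall>g\<in>F. q f g = (if f = g then 1 else 0)"
     and F3: "\<forall>y\<in>UNIV. y = (\<Sum>f\<in>F. q f y *\<^sub>R f)"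
    using gram_schmidt_form[OF bq qsym subspace_UNIV qpos] by blast
  have "\<exists>E. finite E \<and> (\<forall>f\<in>E. \<forall>g\<in>E. q f g = (if f = g then 1 else 0)) \<and>
        (\<forall>y. y = (\<Sum>f\<in>E. q f y *\<^sub>R f))"
    by (intro exI[of _ F] conjI F1 F2 allI bspec[OF F3 UNIV_I])
  then show ?thesis unfolding E_def by (rule someI_ex)
qed

lemma E_props: "finite E" "\<And>y. y = (\<Sum>f\<in>E. q f y *\<^sub>R f)"
proof -
  show "finite E" using E_ex by (rule conjunct1)
  show "\<And>y. y = (\<Sum>f\<in>E. q f y *\<^sub>R f)" using E_ex[THEN conjunct2, THEN conjunct2] by (rule spec)
qed

definition "U = {a. \<forall>y. p a y = 0}"
definition "V = {x. \<forall>a\<in>U. q x a = 0}"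

lemma subspace_U: "subspace U"
  unfolding subspace_def U_def by (auto simp: ps)

lemma subspace_V: "subspace V"
  unfolding subspace_def V_def by (auto simp: qs)

lemma pU: "a \<in> U \<Longrightarrow> p x a \<in> U"
proof -
  assume a: "a \<in> U"
  have "p a x = 0" using a by (simp add: U_def)
  then have "br x a = p x a" using tors[of x a] by simp
  moreover have "p (br x a) y = 0" for y using flat[of x a y] a by (simp add: U_def ps)
  ultimately show "p x a \<in> U" by (simp add: U_def)
qed

lemma pV: "v \<in> V \<Longrightarrow> p x v \<in> V"
proof -
  assume v: "v \<in> V"
  have "q (p x v) a = 0" if a: "a \<in> U" for a
  proof -
    have "q v (p x a) = 0" using v pU[OF a] by (simp add: V_def)
    then show ?thesis using skew[of x v a] by simp
  qed
  then show ?thesis by (simp add: V_def)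
qed

lemma decomp: "\<exists>v\<in>V. \<exists>a\<in>U. x = v + a"
proof -
  have pos: "\<And>y. y \<in> U \<Longrightarrow> y \<noteq> 0 \<Longrightarrow> q y y > 0" using qpos by blast
  obtain G where G: "finite G" "G \<subseteq> U" "\<forall>y\<in>U. y = (\<Sum>g\<in>G. q g y *\<^sub>R g)"
    using gram_schmidt_form[OF bq qsym subspace_U pos] by blast
  define a where "a = (\<Sum>g\<in>G. q g x *\<^sub>R g)"
  have aU: "a \<in> U" unfolding a_def using G subspace_U
    by (intro subspace_sum) (auto intro: subspace_scale)
  have "\<forall>b\<in>U. q (x - a) b = 0"
  proof
    fix b assume b: "b \<in> U"
    have "q a b = (\<Sum>g\<in>G. q g x * q g b)" unfolding a_def by (simp add: bil_sum_l[OF bq G(1)])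
    moreover have "q x b = (\<Sum>g\<in>G. q g b * q x g)"
    proof -
      have "q x b = q x (\<Sum>g\<in>G. q g b *\<^sub>R g)" by (rule arg_cong[OF bspec[OF G(3) b]])
      also have "\<dots> = (\<Sum>g\<in>G. q g b * q x g)" by (simp add: bil_sum_r[OF bq G(1)])
      finally show ?thesis .
    qed
    ultimately show "q (x - a) b = 0" by (simp add: qs qsym mult.commute)
  qed
  then have "x - a \<in> V" by (simp add: V_def)
  then show ?thesis using aU by (intro bexI[of _ "x - a"] bexI[of _ a]) auto
qed

definition "B x y = (\<Sum>e\<in>E. q (p x e) (p y e))"

lemma bB: "bilinear B"
  unfolding bilinear_def
proof (intro conjI allI)
  fix x y
  show "linear (B x)"
    by (rule linearI) (simp_all add: B_def ps qs sum.distrib sum_distrib_left)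
  show "linear (\<lambda>x. B x y)"
    by (rule linearI) (simp_all add: B_def ps qs sum.distrib sum_distrib_left)
qed

lemma Bsym: "B x y = B y x" unfolding B_def by (simp add: qsym)

lemma q_nonneg: "q x x \<ge> 0"
  using qpos[of x] by (cases "x = 0") (auto simp: qs)

lemma Bpos: "x \<in> V \<Longrightarrow> x \<noteq> 0 \<Longrightarrow> B x x > 0"
proof -
  assume xV: "x \<in> V" and x0: "x \<noteq> 0"
  have nn: "B x x \<ge> 0" unfolding B_def by (intro sum_nonneg q_nonneg)
  show "B x x > 0"
  proof (rule ccontr)
    assume "\<not> B x x > 0"
    then have "B x x = 0" using nn by simp
    then have "\<forall>e\<in>E. q (p x e) (p x e) = 0" unfolding B_def
      using sum_nonneg_eq_0_iff[OF E_props(1), of "\<lambda>e. q (p x e) (p x e)"] q_nonneg by simp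
    then have pe: "\<forall>e\<in>E. p x e = 0" using q_self_zero by blast
    have "p x y = 0" for y
    proof -
      have "p x y = p x (\<Sum>e\<in>E. q e y *\<^sub>R e)" by (rule arg_cong[OF E_props(2)])
      also have "\<dots> = (\<Sum>e\<in>E. q e y *\<^sub>R p x e)" by (rule bil_sum_r[OF bp E_props(1)])
      also have "\<dots> = 0" using pe by simp
      finally show ?thesis .
    qed
    then have "x \<in> U" by (simp add: U_def)
    then have "q x x = 0" using xV by (simp add: V_def)
    then show False using x0 q_self_zero by simp
  qed
qed

lemma Binv: "B (br z x) y + B x (br z y) = 0"
proof -
  have bphi: "bilinear (\<lambda>a b. q (p x a) (p y b))"
    unfolding bilinear_def by (auto intro!: linearI simp: ps qs)
  have "(\<Sum>e\<in>E. q (p x (p z e)) (p y e) + q (p x e) (p y (p z e))) = 0"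
  proof (rule orth_skew_sum[OF bq qsym E_props(1) _ subset_UNIV _ _ bphi, where A = "p z"])
    show "\<forall>y\<in>UNIV. y = (\<Sum>g\<in>E. q g y *\<^sub>R g)" by (intro ballI) (rule E_props(2))
  next
    fix f show "p z f \<in> UNIV" by simp
  next
    fix a b show "q (p z a) b = - q a (p z b)" using skew[of z a b] by linarith
  qed
  moreover have "B (br z x) y + B x (br z y) = - (\<Sum>e\<in>E. q (p x (p z e)) (p y e) + q (p x e) (p y (p z e)))"
  proof -
    have "q (p (br z x) e) (p y e) + q (p x e) (p (br z y) e) = - (q (p x (p z e)) (p y e) + q (p x e) (p y (p z e)))" for e
      using skew[of z "p x e" "p y e"] unfolding flat by (simp add: bilinear_lsub[OF bq] bilinear_rsub[OF bq])
    then have "B (br z x) y + B x (br z y) = (\<Sum>e\<in>E. - (q (p x (p z e)) (p y e) + q (p x e) (p y (p z e))))"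
      unfolding B_def sum.distrib[symmetric] by (rule sum.cong[OF refl])
    then show ?thesis by (simp only: sum_negf)
  qed
  ultimately show ?thesis by simp
qed


lemma Bskew: "B (br z a) b = - B a (br z b)"
  using Binv[of z a b] by simp

definition "F = (SOME F. finite F \<and> F \<subseteq> V \<and> (\<forall>f\<in>F. \<forall>g\<in>F. B f g = (if f = g then 1 else 0)) \<and>
        (\<forall>y\<in>V. y = (\<Sum>f\<in>F. B f y *\<^sub>R f)))"

lemma F_ex: "finite F \<and> F \<subseteq> V \<and> (\<forall>f\<in>F. \<forall>g\<in>F. B f g = (if f = g then 1 else 0)) \<and>
        (\<forall>y\<in>V. y = (\<Sum>f\<in>F. B f y *\<^sub>R f))"
proof -
  have "\<exists>F. finite F \<and> F \<subseteq> V \<and> (\<forall>f\<in>F. \<forall>g\<in>F. B f g = (if f = g then 1 else 0)) \<and>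
        (\<forall>y\<in>V. y = (\<Sum>f\<in>F. B f y *\<^sub>R f))"
    by (rule gram_schmidt_form[OF bB Bsym subspace_V Bpos])
  then show ?thesis unfolding F_def by (rule someI_ex)
qed

lemma F_props: "finite F" "F \<subseteq> V" "\<And>y. y \<in> V \<Longrightarrow> y = (\<Sum>f\<in>F. B f y *\<^sub>R f)"
proof -
  show "finite F" using F_ex by (rule conjunct1)
  show "F \<subseteq> V" using F_ex[THEN conjunct2] by (rule conjunct1)
  show "\<And>y. y \<in> V \<Longrightarrow> y = (\<Sum>f\<in>F. B f y *\<^sub>R f)"
    using F_ex[THEN conjunct2, THEN conjunct2, THEN conjunct2] by (rule bspec)
qed

lemma brV: "x \<in> V \<Longrightarrow> v \<in> V \<Longrightarrow> br x v \<in> V"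
  using tors[of x v, symmetric] pV[of v x] pV[of x v] subspace_V by (simp add: subspace_diff)

lemma cancel: assumes xV: "x \<in> V" shows "(\<Sum>f\<in>F. p (br x f) f + p f (br x f)) = 0"
proof (rule orth_skew_sum[OF bB Bsym F_props(1) _ F_props(2) _ _ bp, where A = "br x"])
  show "\<forall>y\<in>V. y = (\<Sum>g\<in>F. B g y *\<^sub>R g)" by (intro ballI) (rule F_props(3))
next
  fix f assume "f \<in> F" then show "br x f \<in> V" using F_props(2) brV[OF xV] by blast
next
  fix a b show "B (br x a) b = - B a (br x b)" by (rule Bskew)
qed

definition "w = (\<Sum>f\<in>F. p f f)"
definition "D y = (\<Sum>f\<in>F. p f (p f y))"

lemma wV: "w \<in> V"
  unfolding w_def using F_props(2) pV subspace_V by (intro subspace_sum) auto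

lemma pxw: "x \<in> V \<Longrightarrow> p x w = D x"
proof -
  assume xV: "x \<in> V"
  have "p x (p f f) = p (br x f) f + p f (p f x) + p f (br x f)" for f
  proof -
    have "p x (p f f) = p (br x f) f + p f (p x f)" using flat[of x f f] by simp
    moreover have "p x f = p f x + br x f" using tors[of x f] by (simp add: algebra_simps)
    ultimately show ?thesis by (simp add: ps)
  qed
  then have "p x w = (\<Sum>f\<in>F. p (br x f) f + p f (br x f)) + D x"
    unfolding w_def D_def by (simp add: linear_sum[OF linear_bil_r[OF bp]] sum.distrib algebra_simps)
  then show ?thesis using cancel[OF xV] by simp
qed

lemma qD: "q (D y) y = - (\<Sum>f\<in>F. q (p f y) (p f y))"
proof -
  have "q (D y) y = (\<Sum>f\<in>F. q (p f (p f y)) y)"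
    unfolding D_def by (simp add: linear_sum[OF linear_bil_l[OF bq]])
  also have "\<dots> = (\<Sum>f\<in>F. - q (p f y) (p f y))"
  proof (rule sum.cong[OF refl])
    fix f show "q (p f (p f y)) y = - q (p f y) (p f y)" using skew[of f "p f y" y] by linarith
  qed
  also have "\<dots> = - (\<Sum>f\<in>F. q (p f y) (p f y))" by (rule sum_negf)
  finally show ?thesis .
qed

lemma sumsq_zero: "(\<Sum>f\<in>F. q (p f y) (p f y)) = 0 \<Longrightarrow> f \<in> F \<Longrightarrow> p f y = 0"
proof -
  assume s: "(\<Sum>f\<in>F. q (p f y) (p f y)) = 0" and f: "f \<in> F"
  have "\<forall>g\<in>F. q (p g y) (p g y) = 0"
    using sum_nonneg_eq_0_iff[OF F_props(1), of "\<lambda>g. q (p g y) (p g y)"] q_nonneg s by simp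
  then have "q (p f y) (p f y) = 0" using f by blast
  then show "p f y = 0" using q_self_zero by simp
qed

lemma LVV: "x \<in> V \<Longrightarrow> y \<in> V \<Longrightarrow> p x y = 0"
proof -
  have "q (D w) w = q (p w w) w" using pxw[OF wV] by simp
  then have "q (D w) w = 0" using q_p_self[of w w] by simp
  then have "(\<Sum>f\<in>F. q (p f w) (p f w)) = 0" using qD[of w] by simp
  then have pfw: "\<And>f. f \<in> F \<Longrightarrow> p f w = 0" by (rule sumsq_zero)
  have pvw: "p v w = 0" if v: "v \<in> V" for v
  proof -
    have "p v w = p (\<Sum>f\<in>F. B f v *\<^sub>R f) w" by (rule arg_cong[where f="\<lambda>v. p v w", OF F_props(3)[OF v]])
    also have "\<dots> = (\<Sum>f\<in>F. B f v *\<^sub>R p f w)" by (rule bil_sum_l[OF bp F_props(1)])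
    finally show ?thesis using pfw by simp
  qed
  assume xV: "x \<in> V" and yV: "y \<in> V"
  have "D y = 0" using pxw[OF yV] pvw[OF yV] by simp
  then have "(\<Sum>f\<in>F. q (p f y) (p f y)) = 0" using qD[of y] by (simp add: qs)
  then have "\<And>f. f \<in> F \<Longrightarrow> p f y = 0" by (rule sumsq_zero)
  then have "p (\<Sum>f\<in>F. B f x *\<^sub>R f) y = 0" by (simp add: bil_sum_l[OF bp F_props(1)])
  moreover have "p x y = p (\<Sum>f\<in>F. B f x *\<^sub>R f) y" by (rule arg_cong[where f="\<lambda>v. p v y", OF F_props(3)[OF xV]])
  ultimately show "p x y = 0" by simp
qed

lemma star: "p (p x y) z = 0"
proof -
  obtain v a where v: "v \<in> V" "a \<in> U" "x = v + a" using decomp by blast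
  obtain v' a' where v': "v' \<in> V" "a' \<in> U" "y = v' + a'" using decomp by blast
  have "p x y = p v a'" using v v' LVV by (simp add: ps U_def)
  then have "p x y \<in> U" using pU[OF v'(2)] by simp
  then show ?thesis by (simp add: U_def)
qed

end


context milnor begin

lemma two_solv: "two_solvable br"
proof -
  have "p (br a b) y = 0" for a b y
    using star[of a b y] star[of b a y] tors[of a b, symmetric] by (simp add: ps)
  then show ?thesis unfolding two_solvable_def using tors by (metis diff_self)
qed

definition "H = (\<Sum>e\<in>E. p e e)"

lemma trL: "(\<Sum>b\<in>Basis. p x b \<bullet> b) = 0"
proof -
  have "(\<Sum>b\<in>Basis. p x b \<bullet> b) = (\<Sum>e\<in>E. q e (p x e))"
    by (rule trace_onb[OF linear_bil_r[OF bp] bq E_props(1) E_props(2)])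
  also have "\<dots> = 0" using q_p_self qsym by (simp)
  finally show ?thesis .
qed

lemma trR: "(\<Sum>b\<in>Basis. p b x \<bullet> b) = - q H x"
proof -
  have "(\<Sum>b\<in>Basis. p b x \<bullet> b) = (\<Sum>e\<in>E. q e (p e x))"
    by (rule trace_onb[OF linear_bil_l[OF bp] bq E_props(1) E_props(2)])
  also have "\<dots> = (\<Sum>e\<in>E. - q (p e e) x)" using skew' by simp
  also have "\<dots> = - q H x" unfolding H_def
    by (simp add: linear_sum[OF linear_bil_l[OF bq]] sum_negf)
  finally show ?thesis .
qed

lemma trH: "(\<Sum>b\<in>Basis. p b H \<bullet> b) = 0"
proof -
  have e1: "p b (p e e) = p e (p b e)" for b e
  proof -
    have "p (br b e) e = 0" using star[of b e e] star[of e b e] tors[of b e, symmetric] by (simp add: ps)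
    then show ?thesis using flat[of b e e] by simp
  qed
  have "(\<Sum>b\<in>Basis. p b H \<bullet> b) = (\<Sum>b\<in>Basis. \<Sum>e\<in>E. p b (p e e) \<bullet> b)"
    unfolding H_def by (simp add: linear_sum[OF linear_bil_r[OF bp]] inner_sum_left)
  also have "\<dots> = (\<Sum>b\<in>Basis. \<Sum>e\<in>E. p e (p b e) \<bullet> b)"
    by (intro sum.cong refl) (metis e1)
  also have "\<dots> = (\<Sum>e\<in>E. \<Sum>b\<in>Basis. p e (p b e) \<bullet> b)" by (rule sum.swap)
  also have "\<dots> = (\<Sum>e\<in>E. \<Sum>b\<in>Basis. p (p e b) e \<bullet> b)"
    by (intro sum.cong refl trace_comm linear_bil_r[OF bp] linear_bil_l[OF bp])
  also have "\<dots> = 0" by (simp add: star)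
  finally show ?thesis .
qed

lemma H0: "H = 0"
  using trH trR[of H] q_self_zero by simp

lemma unimod: "unimodular br"
  unfolding unimodular_def
proof
  fix x
  have "(\<Sum>b\<in>Basis. br x b \<bullet> b) = (\<Sum>b\<in>Basis. p x b \<bullet> b) - (\<Sum>b\<in>Basis. p b x \<bullet> b)"
    by (simp add: tors[symmetric] inner_diff_left sum_subtractf)
  then show "(\<Sum>b\<in>Basis. br x b \<bullet> b) = 0" using trL trR H0 by (simp add: qs)
qed

lemma complete: "geodesically_complete p"
  unfolding geodesically_complete_def
proof
  fix c0
  obtain c where c: "c 0 = c0" "\<And>t. (c has_vector_derivative (- p c0 (c t))) (at t)"
    using linear_ode_exists[OF linear_bil_r[OF bp], of c0] by blast
  have const: "p (c t) y = p c0 y" for t y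
  proof -
    have g: "p (c t) y \<bullet> z = p (c 0) y \<bullet> z" for z
    proof (rule DERIV_isconst_all[of "\<lambda>s. p (c s) y \<bullet> z" t 0], intro allI)
      fix s
      have bl: "bounded_linear (\<lambda>x. p x y \<bullet> z)"
        by (rule linear_conv_bounded_linear[THEN iffD1]) (auto intro!: linearI simp: ps inner_add_left)
      have "((\<lambda>s. p (c s) y \<bullet> z) has_derivative (\<lambda>h. p (h *\<^sub>R (- p c0 (c s))) y \<bullet> z)) (at s)"
        using bounded_linear.has_derivative[OF bl c(2)[of s, unfolded has_vector_derivative_def]] .
      moreover have "(\<lambda>h. p (h *\<^sub>R (- p c0 (c s))) y \<bullet> z) = (*) 0"
        by (rule ext) (simp add: ps star)
      ultimately show "((\<lambda>s. p (c s) y \<bullet> z) has_real_derivative 0) (at s)"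
        by (simp add: has_field_derivative_def)
    qed
    have "(p (c t) y - p (c 0) y) \<bullet> (p (c t) y - p (c 0) y) = 0"
      using g by (simp add: inner_diff_left)
    then show ?thesis using c(1) by simp
  qed
  show "\<exists>c. c 0 = c0 \<and> (\<forall>t. (c has_vector_derivative - p (c t) (c t)) (at t))"
    using c const by (intro exI[of _ c]) (metis c(2))
qed

end


lemma lor_timelike_compl:
  fixes m :: "'a::euclidean_space \<Rightarrow> 'a \<Rightarrow> real"
  assumes bm: "bilinear m" and msym: "\<And>x y. m x y = m y x"
    and e: "m e e = -1" "\<And>v. m e v = 0 \<Longrightarrow> v \<noteq> 0 \<Longrightarrow> m v v > 0"
    and t: "m t t < 0" and vt: "m v t = 0" and v0: "v \<noteq> 0"
  shows "m v v > 0"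
proof (rule ccontr)
  assume "\<not> m v v > 0"
  then have vv: "m v v \<le> 0" by simp
  define \<alpha> where "\<alpha> = m v e"
  define \<beta> where "\<beta> = - m t e"
  define z where "z = \<alpha> *\<^sub>R t + \<beta> *\<^sub>R v"
  have ms: "m (a *\<^sub>R x + b *\<^sub>R y) w = a * m x w + b * m y w"
    "m w (a *\<^sub>R x + b *\<^sub>R y) = a * m w x + b * m w y" for a b x y w
    by (simp_all add: bilinear_ladd[OF bm] bilinear_radd[OF bm] bilinear_lmul[OF bm] bilinear_rmul[OF bm])
  have ez: "m e z = 0" unfolding z_def \<alpha>_def \<beta>_def ms using msym[of e t] msym[of e v] by simp
  have tv: "m t v = 0" using vt msym by simp
  have "m z z = \<alpha> * \<alpha> * m t t + \<beta> * \<beta> * m v v"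
    unfolding z_def ms using vt tv by (simp add: algebra_simps)
  also have "\<dots> \<le> 0" using t vv by (simp add: mult_nonneg_nonpos mult_nonpos_nonpos add_nonpos_nonpos)
  finally have "m z z \<le> 0" .
  then have z0: "z = 0" using e(2)[OF ez] by force
  show False
  proof (cases "\<beta> = 0")
    case True
    then have "m e t = 0" using msym[of e t] \<beta>_def by simp
    moreover have "t \<noteq> 0" using t by (auto simp: bilinear_lzero[OF bm])
    ultimately show False using e(2) t by force
  next
    case False
    have "m z t = \<alpha> * m t t + \<beta> * m v t" unfolding z_def ms by simp
    then have "\<alpha> * m t t = 0" using z0 vt by (simp add: bilinear_lzero[OF bm])
    then have "\<alpha> = 0" using t by simp
    then have "\<beta> *\<^sub>R v = 0" using z0 z_def by simp
    then show False using False v0 by simp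
  qed
qed

theorem corollary1p2:
  fixes br :: "'a::euclidean_space \<Rightarrow> 'a \<Rightarrow> 'a"
    and m :: "'a \<Rightarrow> 'a \<Rightarrow> real"
    and p :: "'a \<Rightarrow> 'a \<Rightarrow> 'a"
  assumes "lie_algebra br"
    and "lorentzian_form m"
    and "levi_civita_product br m p"
    and "flat_product br p"
    and "\<exists>u. m u u < 0 \<and> killing_vector m p u"
  shows "two_solvable br \<and> unimodular br \<and> geodesically_complete p"
proof -
  have bm: "bilinear m" and msym: "\<And>x y. m x y = m y x"
    using assms(2) by (auto simp: lorentzian_form_def)
  obtain e where e: "m e e = -1" "\<And>v. m e v = 0 \<Longrightarrow> v \<noteq> 0 \<Longrightarrow> m v v > 0"
    using assms(2) by (auto simp: lorentzian_form_def)
  have bp: "bilinear p" and tors: "\<And>a b. p a b - p b a = br a b"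
    and met: "\<And>a b c. m (p a b) c + m b (p a c) = 0"
    using assms(3) by (auto simp: levi_civita_product_def)
  have flat: "\<And>a b c. p (br a b) c = p a (p b c) - p b (p a c)"
    using assms(4) by (simp add: flat_product_def)
  obtain u where u: "m u u < 0" and kil: "\<And>v w. m (p v u) w + m v (p w u) = 0"
    using assms(5) by (auto simp: killing_vector_def)
  note ms = bilinear_ladd[OF bm] bilinear_radd[OF bm] bilinear_lmul[OF bm] bilinear_rmul[OF bm]
    bilinear_lneg[OF bm] bilinear_rneg[OF bm] bilinear_lzero[OF bm] bilinear_rzero[OF bm]
    bilinear_lsub[OF bm] bilinear_rsub[OF bm]
  note ps = bilinear_ladd[OF bp] bilinear_radd[OF bp] bilinear_lmul[OF bp] bilinear_rmul[OF bp]
    bilinear_lneg[OF bp] bilinear_rneg[OF bp] bilinear_lzero[OF bp] bilinear_rzero[OF bp]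
    bilinear_lsub[OF bp] bilinear_rsub[OF bp]
  have compl: "\<And>t v. m t t < 0 \<Longrightarrow> m v t = 0 \<Longrightarrow> v \<noteq> 0 \<Longrightarrow> m v v > 0"
    using lor_timelike_compl[OF bm msym e] by blast
  have nondeg: "z = 0" if "\<And>y. m z y = 0" for z
  proof (rule ccontr)
    assume "z \<noteq> 0"
    then have "m z z > 0" using compl[of e z] e(1) that by simp
    then show False using that[of z] by simp
  qed
  \<comment> \<open>Killing on a flat space: the second covariant derivative vanishes\<close>
  define T where "T w v z = m (p w (p v u) - p (p w v) u) z" for w v z
  have Tsym: "T w v z = T v w z" for w v z
  proof -
    have "p (br w v) u = p (p w v) u - p (p v w) u" using tors[of w v, symmetric] by (simp add: ps)
    then have "p w (p v u) - p (p w v) u = p v (p w u) - p (p v w) u"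
      using flat[of w v u] by (simp add: algebra_simps)
    then show ?thesis unfolding T_def by simp
  qed
  have Tanti: "T w v z = - T w z v" for w v z
  proof -
    have "T w v z = - m (p v u) (p w z) + m (p w v) (p z u)"
      unfolding T_def using met[of w "p v u" z] kil[of "p w v" z] by (simp add: ms)
    moreover have "T w z v = - m (p z u) (p w v) + m (p w z) (p v u)"
      unfolding T_def using met[of w "p z u" v] kil[of "p w z" v] by (simp add: ms)
    ultimately show ?thesis using msym[of "p v u" "p w z"] msym[of "p z u" "p w v"] by simp
  qed
  have T0: "T a b c = 0" for a b c
  proof -
    have "T a b c = - T a c b" by (rule Tanti)
    also have "\<dots> = - T c a b" by (simp add: Tsym)
    also have "\<dots> = T c b a" by (simp add: Tanti[of c a b])
    also have "\<dots> = T b c a" by (simp add: Tsym)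
    also have "\<dots> = - T b a c" by (rule Tanti)
    also have "\<dots> = - T a b c" by (simp add: Tsym)
    finally show ?thesis by simp
  qed
  have Q: "p (p x y) u = p x (p y u)" for x y
  proof -
    have "p x (p y u) - p (p x y) u = 0" by (rule nondeg) (use T0 in \<open>simp add: T_def\<close>)
    then show ?thesis by simp
  qed
  have Ju_perp: "m (p x u) u = 0" for x using met[of x u u] msym[of u "p x u"] by simp
  have puu: "p u u = 0"
  proof (rule nondeg)
    fix y show "m (p u u) y = 0" using kil[of u y] Ju_perp[of y] msym[of u "p y u"] by simp
  qed
  have par: "p x u = 0" for x
  proof (rule ccontr)
    assume ne: "p x u \<noteq> 0"
    have "p (p x u) u = 0" using Q[of x u] puu by (simp add: ps)
    then have "m (p x u) (p x u) = 0" using kil[of x "p x u"] by (simp add: ms)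
    moreover have "m (p x u) (p x u) > 0" using compl[OF u Ju_perp ne] .
    ultimately show False by simp
  qed
  define n where "n = (1 / sqrt (- m u u)) *\<^sub>R u"
  have nn: "m n n = -1" using u
    by (simp add: n_def ms real_sqrt_mult[symmetric] power2_eq_square[symmetric])
  have pn: "p x n = 0" for x by (simp add: n_def ps par)
  define q where "q x y = m x y + 2 * m x n * m y n" for x y
  have mil: "milnor q p br"
  proof
    show "bilinear q" unfolding bilinear_def q_def
      by (auto intro!: linearI simp: ms algebra_simps)
    show "q x y = q y x" for x y unfolding q_def using msym by (simp add: mult.commute)
    show "q x x > 0" if x0: "x \<noteq> 0" for x
    proof -
      define c where "c = m x n"
      define x' where "x' = x + c *\<^sub>R n"
      have x'n: "m x' n = 0" unfolding x'_def c_def by (simp add: ms nn)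
      have xx: "m x x = m x' x' - c * c"
      proof -
        have "x = x' - c *\<^sub>R n" unfolding x'_def by simp
        then have "m x x = m (x' - c *\<^sub>R n) (x' - c *\<^sub>R n)" by simp
        also have "\<dots> = m x' x' - c * c" using x'n msym[of n x'] nn by (simp add: ms algebra_simps)
        finally show ?thesis .
      qed
      have "q x x = m x' x' + c * c" unfolding q_def using xx c_def by simp
      moreover have "m x' x' + c * c > 0"
      proof (cases "x' = 0")
        case True
        then have "x = - c *\<^sub>R n" unfolding x'_def by (simp add: eq_neg_iff_add_eq_0)
        then have "c \<noteq> 0" using x0 by auto
        then show ?thesis using True by (auto simp: ms zero_less_mult_iff)
      next
        case False
        have "m n n < 0" using nn by simp
        then have "m x' x' > 0" using compl[OF _ x'n False] by blast
        then show ?thesis by (simp add: add_pos_nonneg)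
      qed
      ultimately show ?thesis by simp
    qed
    show "bilinear p" by (rule bp)
    show "q (p a b) c + q b (p a c) = 0" for a b c
    proof -
      have "m (p a b) n = 0" using met[of a b n] pn by (simp add: ms)
      moreover have "m (p a c) n = 0" using met[of a c n] pn by (simp add: ms)
      ultimately show ?thesis unfolding q_def using met[of a b c] by simp
    qed
    show "p a b - p b a = br a b" for a b by (rule tors)
    show "p (br a b) c = p a (p b c) - p b (p a c)" for a b c by (rule flat)
  qed
  show ?thesis
    using milnor.two_solv[OF mil] milnor.unimod[OF mil] milnor.complete[OF mil] by blast
qed


end
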